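(* Let $\mathbf b=\sum_{j=1}^mv_j\mathbf a_j\in\mathcal B$ ($v_j\in[0,1)$) and $u\in M$ with $u-\mathbf b\in\mathbb ZA_+$. Let $\sigma_{\mathbf b}$ be the smallest closed face of $C(A)$ containing $\mathbf b$, and suppose $\sigma_{\mathbf b}\neq C(A)$. Then $G^{(\mathbf b)}_u(\lambda)$ is a nonzero constant if and only if $u=\mathbf b+\sum_{\{j:\mathbf a_j\in\sigma_{\mathbf b}\}}t_j\mathbf a_j$ for (unique) $t_j\in\mathbb Z_{\ge0}$, in which case \[G^{(\mathbf b)}_u(\lambda)=\Big(\prod_{\{j:\mathbf a_j\in\sigma_{\mathbf b}\}}\ell_j^{-t_j}\Big)\Big(\prod_{\{j:\mathbf a_j\in\sigma_{\mathbf b}\}}[-v_j]_{-t_j}\Big).\] If $u$ is not of this form, then $G^{(\mathbf b)}_u(\lambda)=0$.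
   Context: Let $A=\{\mathbf a_1,\dots,\mathbf a_m\}\subseteq\mathbb Z^n$ be linearly independent over $\mathbb R$, $\mathbf a_0\in\mathbb Z^n$, and $\ell_0,\dots,\ell_m$ positive integers with gcd $1$, $\ell_0\mathbf a_0=\sum_{j=1}^m\ell_j\mathbf a_j$, $\ell_0=\sum_{j=1}^m\ell_j$. Let $\mathbb ZA_+$ be the group generated by $A\cup\{\mathbf a_0\}$. Let $V$ be the real span of $A$, $V_{\mathbb Z}=V\cap\mathbb Z^n$, $C(A)$ the closed real cone generated by $A$, $M=V_{\mathbb Z}\cap C(A)$, $P(A)=\{\sum_jc_j\mathbf a_j:0\le c_j<1\}$, $\mathcal B=V_{\mathbb Z}\cap P(A)$. For $z\in\mathbb C$, $l\in\mathbb Z$: $[z]_0=1$, $[z]_l=1/((z+1)\cdots(z+l))$ for $l>0$, $[z]_l=z(z-1)\cdots(z+l+1)$ for $l<0$. For $\mathbf b=\sum_jv_j\mathbf a_j\in\mathcal B$ and $w\in M$, let $g^{(\mathbf b)}_w=\prod_j[-v_j]_{s_j}\ell_j^{s_j}$ if $w=\sum_j(v_j-s_j)\mathbf a_j$ with all $s_j\in\mathbb Z_{\le0}$, and $0$ otherwise; and $G^{(\mathbf b)}_u(\lambda)=\sum_{s\ge0}g^{(\mathbf b)}_{u+s\mathbf a_0}\frac{(-\ell_0\lambda)^s}{s!}\in\mathbb C[[\lambda]]$. *)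

theory Defs
  imports "HOL-Analysis.Analysis" "HOL-Computational_Algebra.Formal_Power_Series"
begin

text \<open>The vectors a_1,...,a_m are given as a function a on indices 1..m (a 0 is the extra
vector a_0); the ambient space is real^'n and integrality is stated coordinatewise.\<close>

definition int_vec :: "real ^ 'n \<Rightarrow> bool" where
  "int_vec x \<longleftrightarrow> (\<forall>i. x $ i \<in> \<int>)"

definition coneA :: "(nat \<Rightarrow> real ^ 'n) \<Rightarrow> nat \<Rightarrow> (real ^ 'n) set" where
  "coneA a m = {x. \<exists>c::nat \<Rightarrow> real. (\<forall>j\<in>{1..m}. c j \<ge> 0) \<and> x = (\<Sum>j=1..m. c j *\<^sub>R a j)}"

definition MA :: "(nat \<Rightarrow> real ^ 'n) \<Rightarrow> nat \<Rightarrow> (real ^ 'n) set" where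
  "MA a m = {x. x \<in> span (a ` {1..m}) \<and> int_vec x \<and> x \<in> coneA a m}"

definition ZAplus :: "(nat \<Rightarrow> real ^ 'n) \<Rightarrow> nat \<Rightarrow> (real ^ 'n) set" where
  "ZAplus a m = {x. \<exists>k::nat \<Rightarrow> int. x = (\<Sum>j=0..m. of_int (k j) *\<^sub>R a j)}"

definition bracket :: "complex \<Rightarrow> int \<Rightarrow> complex" where
  "bracket z l = (if l = 0 then 1
     else if l > 0 then 1 / (\<Prod>i=1..nat l. z + of_nat i)
     else (\<Prod>i<nat (- l). z - of_nat i))"

definition gcoef :: "(nat \<Rightarrow> real ^ 'n) \<Rightarrow> nat \<Rightarrow> (nat \<Rightarrow> nat) \<Rightarrow> (nat \<Rightarrow> real)
    \<Rightarrow> real ^ 'n \<Rightarrow> complex" where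
  "gcoef a m l v w =
    (if \<exists>s::nat \<Rightarrow> int. (\<forall>j\<in>{1..m}. s j \<le> 0) \<and> w = (\<Sum>j=1..m. (v j - of_int (s j)) *\<^sub>R a j)
     then (let s = (SOME s::nat \<Rightarrow> int. (\<forall>j\<in>{1..m}. s j \<le> 0) \<and>
                      w = (\<Sum>j=1..m. (v j - of_int (s j)) *\<^sub>R a j))
           in (\<Prod>j=1..m. bracket (- complex_of_real (v j)) (s j) * (of_nat (l j)) powi (s j)))
     else 0)"

definition Gser :: "(nat \<Rightarrow> real ^ 'n) \<Rightarrow> nat \<Rightarrow> (nat \<Rightarrow> nat) \<Rightarrow> (nat \<Rightarrow> real)
    \<Rightarrow> real ^ 'n \<Rightarrow> complex fps" where
  "Gser a m l v u = Abs_fps (\<lambda>s. gcoef a m l v (u + of_nat s *\<^sub>R a 0)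
      * (- of_nat (l 0)) ^ s / fact s)"

definition min_closed_face :: "'a::real_normed_vector set \<Rightarrow> 'a \<Rightarrow> 'a set" where
  "min_closed_face S x = \<Inter>{F. F face_of S \<and> closed F \<and> x \<in> F}"

end

theory Submission
  imports Defs
begin


definition lin :: "(nat \<Rightarrow> real ^ 'n) \<Rightarrow> nat \<Rightarrow> (nat \<Rightarrow> real) \<Rightarrow> real ^ 'n" where
  "lin a m r = (\<Sum>j=1..m. r j *\<^sub>R a j)"

lemma coord_exists:
  fixes a :: "nat \<Rightarrow> real ^ 'n"
  assumes inj: "inj_on a {1..m}" and ind: "independent (a ` {1..m})"
  shows "\<exists>g. (\<forall>i. linear (g i)) \<and> (\<forall>i\<in>{1..m}. \<forall>k\<in>{1..m}. g i (a k) = (if i = k then 1 else (0::real)))"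
proof -
  have ex: "\<exists>gi. linear gi \<and> (\<forall>x\<in>a ` {1..m}. gi x = (if x = a i then 1 else (0::real)))" for i
    by (rule linear_independent_extend[OF ind])
  obtain g where g: "\<And>i. linear (g i)" "\<And>i. \<forall>x\<in>a ` {1..m}. g i x = (if x = a i then 1 else (0::real))"
    using ex by metis
  have "g i (a k) = (if i = k then 1 else 0)" if i: "i \<in> {1..m}" and k: "k \<in> {1..m}" for i k
  proof -
    have "a k = a i \<longleftrightarrow> k = i" using inj i k by (auto dest: inj_onD)
    then show ?thesis using g(2)[of i] k by auto
  qed
  then show ?thesis using g(1) by blast
qed

lemma g_lin:
  assumes g: "\<forall>i. linear (g i)" "\<forall>i\<in>{1..m}. \<forall>k\<in>{1..m}. g i (a k) = (if i = k then 1 else (0::real))"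
    and i: "i \<in> {1..m}"
  shows "g i (lin a m r) = r i"
proof -
  have "g i (lin a m r) = (\<Sum>j=1..m. r j * g i (a j))"
    unfolding lin_def using g(1) by (simp add: linear_sum linear_scale)
  also have "\<dots> = (\<Sum>j=1..m. (if j = i then r j else 0))"
    by (rule sum.cong) (use g(2) i in auto)
  also have "\<dots> = r i" using i by simp
  finally show ?thesis .
qed

lemma lin_eq_iff:
  assumes g: "\<forall>i. linear (g i)" "\<forall>i\<in>{1..m}. \<forall>k\<in>{1..m}. g i (a k) = (if i = k then 1 else (0::real))"
  shows "lin a m r = lin a m r' \<longleftrightarrow> (\<forall>i\<in>{1..m}. r i = r' i)"
proof
  assume "lin a m r = lin a m r'"
  then show "\<forall>i\<in>{1..m}. r i = r' i" using g_lin[OF g] by metis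
next
  assume "\<forall>i\<in>{1..m}. r i = r' i"
  then show "lin a m r = lin a m r'" unfolding lin_def by (intro sum.cong) auto
qed

lemma lin_add: "lin a m r + lin a m r' = lin a m (\<lambda>j. r j + r' j)"
  unfolding lin_def by (simp add: sum.distrib scaleR_add_left)

lemma lin_diff: "lin a m r - lin a m r' = lin a m (\<lambda>j. r j - r' j)"
  unfolding lin_def by (simp add: sum_subtractf scaleR_diff_left)

lemma lin_scale: "c *\<^sub>R lin a m r = lin a m (\<lambda>j. c * r j)"
  unfolding lin_def by (simp add: scaleR_sum_right)

lemma lin_sub:
  assumes "J \<subseteq> {1..m}"
  shows "(\<Sum>j\<in>J. f j *\<^sub>R a j) = lin a m (\<lambda>j. if j \<in> J then f j else 0)"
proof -
  have "lin a m (\<lambda>j. if j \<in> J then f j else 0) = (\<Sum>j=1..m. if j \<in> J then f j *\<^sub>R a j else 0)"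
    unfolding lin_def by (intro sum.cong) auto
  also have "\<dots> = (\<Sum>j\<in>{1..m} \<inter> J. f j *\<^sub>R a j)" by (simp add: sum.inter_restrict)
  also have "{1..m} \<inter> J = J" using assms by auto
  finally show ?thesis by simp
qed


lemma lin_delta: "j \<in> {1..m} \<Longrightarrow> a j = lin a m (\<lambda>i. if i = j then 1 else 0)"
proof -
  assume j: "j \<in> {1..m}"
  have "(\<lambda>i. (if i = j then 1 else 0) *\<^sub>R a i) = (\<lambda>i. if i = j then a j else 0)" by auto
  then have "lin a m (\<lambda>i. if i = j then 1 else 0) = (\<Sum>i=1..m. if i = j then a j else 0)"
    unfolding lin_def by (intro sum.cong) auto
  also have "\<dots> = a j" using j by (simp add: sum.delta)
  finally show ?thesis by simp
qed

lemma cone_lin: "coneA a m = {lin a m c | c. \<forall>j\<in>{1..m}. 0 \<le> c j}"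
  unfolding coneA_def lin_def by auto

lemma cone_convex: "convex (coneA a m)"
  unfolding convex_def
proof (intro ballI allI impI)
  fix x y and u v :: real assume "x \<in> coneA a m" "y \<in> coneA a m" and u: "0 \<le> u" and v: "0 \<le> v" and "u + v = 1"
  then obtain c d where c: "\<forall>j\<in>{1..m}. 0 \<le> c j" and d: "\<forall>j\<in>{1..m}. 0 \<le> d j"
    and x: "x = lin a m c" and y: "y = lin a m d" by (auto simp: cone_lin)
  have "u *\<^sub>R x + v *\<^sub>R y = lin a m (\<lambda>j. u * c j + v * d j)"
    by (simp add: x y lin_scale lin_add)
  moreover have "\<forall>j\<in>{1..m}. 0 \<le> u * c j + v * d j" using u v c d by simp
  ultimately show "u *\<^sub>R x + v *\<^sub>R y \<in> coneA a m" by (auto simp: cone_lin)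
qed

lemma cone_closed:
  fixes a :: "nat \<Rightarrow> real ^ 'n"
  assumes inj: "inj_on a {1..m}"
    and g: "\<forall>i. linear (g i)" "\<forall>i\<in>{1..m}. \<forall>k\<in>{1..m}. g i (a k) = (if i = k then 1 else (0::real))"
  shows "closed (coneA a m)"
proof -
  have eq: "coneA a m = span (a ` {1..m}) \<inter> (\<Inter>i\<in>{1..m}. {x. 0 \<le> g i x})"
  proof (intro equalityI subsetI)
    fix x assume "x \<in> coneA a m"
    then obtain c where x: "x = lin a m c" and c: "\<forall>j\<in>{1..m}. 0 \<le> c j" by (auto simp: cone_lin)
    have "x \<in> span (a ` {1..m})" unfolding x lin_def
      by (intro span_sum span_scale span_base) auto
    moreover have "\<forall>i\<in>{1..m}. 0 \<le> g i x" using g_lin[OF g] c x by simp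
    ultimately show "x \<in> span (a ` {1..m}) \<inter> (\<Inter>i\<in>{1..m}. {x. 0 \<le> g i x})" by auto
  next
    fix x assume x: "x \<in> span (a ` {1..m}) \<inter> (\<Inter>i\<in>{1..m}. {x. 0 \<le> g i x})"
    then obtain u where "x = (\<Sum>w\<in>a ` {1..m}. u w *\<^sub>R w)" using span_finite[of "a ` {1..m}"] by auto
    also have "\<dots> = lin a m (u \<circ> a)" unfolding lin_def using sum.reindex[OF inj] by simp
    finally have xl: "x = lin a m (u \<circ> a)" .
    have "\<forall>j\<in>{1..m}. 0 \<le> (u \<circ> a) j" using x g_lin[OF g, of _ "u \<circ> a"] xl by auto
    then show "x \<in> coneA a m" using xl by (auto simp: cone_lin)
  qed
  have "closed {x. 0 \<le> g i x}" for i
    using g(1) by (intro closed_Collect_le continuous_on_const linear_continuous_on)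
       (auto simp: linear_conv_bounded_linear)
  then show ?thesis unfolding eq by (intro closed_Int closed_span closed_INT) auto
qed

lemma bracket_zero_neg: "k < 0 \<Longrightarrow> bracket 0 k = 0"
  unfolding bracket_def by (auto intro!: bexI[of _ 0])

lemma bracket_nonzero:
  assumes "0 < v"
  shows "bracket (- complex_of_real v) (- int t) \<noteq> 0"
proof (cases "t = 0")
  case True then show ?thesis by (simp add: bracket_def)
next
  case False
  have "- complex_of_real v - of_nat i \<noteq> 0" for i
  proof
    assume "- complex_of_real v - of_nat i = 0"
    then have "Re (- complex_of_real v - of_nat i) = 0" by simp
    then show False using assms by simp
  qed
  then show ?thesis using False unfolding bracket_def by auto
qed



theorem corollary4p16:
  fixes a :: "nat \<Rightarrow> real ^ 'n" and m :: nat and l :: "nat \<Rightarrow> nat"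
    and v :: "nat \<Rightarrow> real" and b u :: "real ^ 'n"
  assumes a_int: "\<forall>j\<in>{0..m}. int_vec (a j)"
    and a_inj: "inj_on a {1..m}"
    and a_indep: "independent (a ` {1..m})"
    and l_pos: "\<forall>j\<in>{0..m}. l j > 0"
    and l_gcd: "Gcd (l ` {0..m}) = 1"
    and l_rel: "of_nat (l 0) *\<^sub>R a 0 = (\<Sum>j=1..m. of_nat (l j) *\<^sub>R a j)"
    and l_sum: "l 0 = (\<Sum>j=1..m. l j)"
    and v_range: "\<forall>j\<in>{1..m}. 0 \<le> v j \<and> v j < 1"
    and b_def: "b = (\<Sum>j=1..m. v j *\<^sub>R a j)"
    and b_int: "int_vec b"
    and u_M: "u \<in> MA a m"
    and u_b: "u - b \<in> ZAplus a m"
    and face_proper: "min_closed_face (coneA a m) b \<noteq> coneA a m"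
  defines "J \<equiv> {j\<in>{1..m}. a j \<in> min_closed_face (coneA a m) b}"
  shows "((\<exists>c. c \<noteq> 0 \<and> Gser a m l v u = fps_const c)
            \<longleftrightarrow> (\<exists>t::nat \<Rightarrow> nat. u = b + (\<Sum>j\<in>J. of_nat (t j) *\<^sub>R a j)))
      \<and> (\<forall>t t'::nat \<Rightarrow> nat. u = b + (\<Sum>j\<in>J. of_nat (t j) *\<^sub>R a j)
            \<longrightarrow> u = b + (\<Sum>j\<in>J. of_nat (t' j) *\<^sub>R a j) \<longrightarrow> (\<forall>j\<in>J. t j = t' j))
      \<and> (\<forall>t::nat \<Rightarrow> nat. u = b + (\<Sum>j\<in>J. of_nat (t j) *\<^sub>R a j)
            \<longrightarrow> Gser a m l v u = fps_const
                 ((\<Prod>j\<in>J. (of_nat (l j)) powi (- int (t j)))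
                  * (\<Prod>j\<in>J. bracket (- complex_of_real (v j)) (- int (t j)))))
      \<and> ((\<nexists>t::nat \<Rightarrow> nat. u = b + (\<Sum>j\<in>J. of_nat (t j) *\<^sub>R a j))
            \<longrightarrow> Gser a m l v u = 0)"
proof -
  obtain g where g: "\<forall>i. linear (g i)" "\<forall>i\<in>{1..m}. \<forall>k\<in>{1..m}. g i (a k) = (if i = k then 1 else (0::real))"
    using coord_exists[OF a_inj a_indep] by blast
  note gl = g_lin[OF g]
  note leq = lin_eq_iff[OF g]
  define S where "S = coneA a m"
  have convS: "convex S" unfolding S_def by (rule cone_convex)
  have closedS: "closed S" unfolding S_def by (rule cone_closed[OF a_inj g])
  have S_lin: "S = {lin a m c | c. \<forall>j\<in>{1..m}. 0 \<le> c j}" unfolding S_def by (rule cone_lin)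
  have b_lin: "b = lin a m v" unfolding b_def lin_def ..
  have bS: "b \<in> S" using v_range b_lin S_lin by auto

  have key_in: "x \<in> F" if c: "\<forall>j\<in>{1..m}. 0 \<le> c j" and x: "x = lin a m c" and e: "0 < e" "e < 1"
    and ec: "\<forall>i\<in>{1..m}. e * c i \<le> v i" and F: "F face_of S" and bF: "b \<in> F" for x c e F
  proof -
    define d where "d i = (v i - e * c i) / (1 - e)" for i
    define y where "y = lin a m d"
    have yS: "y \<in> S" unfolding S_lin y_def using ec e by (auto simp: d_def intro!: divide_nonneg_pos)
    have xS: "x \<in> S" unfolding S_lin using c x by auto
    have bxy: "b = (1 - (1 - e)) *\<^sub>R x + (1 - e) *\<^sub>R y"
    proof -
      have "(1 - (1 - e)) *\<^sub>R x + (1 - e) *\<^sub>R y = lin a m (\<lambda>i. (1 - (1 - e)) * c i + (1 - e) * d i)"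
        unfolding x y_def by (simp add: lin_scale lin_add)
      also have "\<dots> = lin a m v"
        using e by (intro arg_cong[where f="lin a m"] ext) (simp add: d_def field_simps)
      finally show ?thesis using b_lin by simp
    qed
    show ?thesis
    proof (cases "x = y")
      case True
      then have "b = x" using bxy by (simp add: algebra_simps)
      then show ?thesis using bF by simp
    next
      case False
      then have "b \<in> open_segment x y" unfolding in_segment using e bxy
        by (intro conjI exI[of _ "1 - e"]) auto
      then show ?thesis using F xS yS bF unfolding face_of_def by blast
    qed
  qed

  have inJ: "a j \<in> min_closed_face S b" if j: "j \<in> {1..m}" and vj: "v j > 0" for j
    unfolding min_closed_face_def
  proof (intro InterI, clarify)
    fix F assume F: "F face_of S" "closed F" "b \<in> F"
    show "a j \<in> F"
      by (rule key_in[of "\<lambda>i. if i = j then 1 else 0" _ "v j"])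
         (use j vj v_range F lin_delta[OF j] in auto)
  qed

  define K where "K = {i\<in>{1..m}. v i = 0}"
  have K_sub: "K \<subseteq> {1..m}" unfolding K_def by auto
  define h where "h x = (\<Sum>i\<in>K. g i x)" for x
  have h_lin: "linear h" unfolding h_def using g(1) by (intro linear_compose_sum) auto
  have h_val: "h (lin a m c) = (\<Sum>i\<in>K. c i)" for c
    unfolding h_def using K_sub gl by (intro sum.cong) auto
  have h_nonneg: "x \<in> S \<Longrightarrow> 0 \<le> h x" for x
    using S_lin h_val K_sub by (force intro: sum_nonneg)

  have notJ: "a j \<notin> min_closed_face S b" if j: "j \<in> {1..m}" and vj: "v j = 0" for j
  proof -
    define F0 where "F0 = S \<inter> {x. h x = 0}"
    have hsub: "subspace {x. h x = 0}" unfolding subspace_def using h_lin by (simp add: linear_0 linear_add linear_scale)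
    have "F0 face_of S" unfolding face_of_def
    proof (intro conjI ballI impI)
      show "F0 \<subseteq> S" unfolding F0_def by auto
      show "convex F0" unfolding F0_def using convS subspace_imp_convex[OF hsub] by (rule convex_Int)
    next
      fix x y z assume xS: "x \<in> S" and yS: "y \<in> S" and z: "z \<in> F0" and "z \<in> open_segment x y"
      then obtain w where w: "0 < w" "w < 1" and zw: "z = (1 - w) *\<^sub>R x + w *\<^sub>R y"
        unfolding in_segment by auto
      have "h z = (1 - w) * h x + w * h y" unfolding zw using h_lin
        by (simp add: linear_add linear_scale)
      moreover have "h z = 0" using z unfolding F0_def by simp
      moreover have "0 \<le> h x" "0 \<le> h y" using h_nonneg xS yS by auto
      ultimately have "h x = 0" "h y = 0" using w
        by (smt (verit) mult_nonneg_nonneg mult_pos_pos)+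
      then show "x \<in> F0" "y \<in> F0" using xS yS unfolding F0_def by auto
    qed
    moreover have "closed F0" unfolding F0_def
      using closedS closed_subspace[OF hsub] by (rule closed_Int)
    moreover have "b \<in> F0" unfolding F0_def using bS b_lin h_val K_def by simp
    moreover have "a j \<notin> F0"
    proof -
      have "h (a j) = (\<Sum>i\<in>K. if i = j then 1 else 0)"
        unfolding lin_delta[OF j] h_val ..
      also have "\<dots> = 1" using j vj K_def by simp
      finally show ?thesis unfolding F0_def by simp
    qed
    ultimately show ?thesis unfolding min_closed_face_def by blast
  qed

  have J_eq: "J = {j\<in>{1..m}. v j > 0}"
    unfolding J_def S_def[symmetric] using inJ notJ v_range by force
  have J_sub: "J \<subseteq> {1..m}" unfolding J_eq by auto
  have fin1: "finite {1..m::nat}" by simp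

  have "\<exists>j0\<in>{1..m}. v j0 = 0"
  proof (rule ccontr)
    assume "\<not> ?thesis"
    then have vpos: "\<forall>i\<in>{1..m}. v i > 0" using v_range by force
    have "min_closed_face S b = S"
    proof
      show "min_closed_face S b \<subseteq> S" unfolding min_closed_face_def
        using face_of_refl[OF convS] closedS bS by blast
      show "S \<subseteq> min_closed_face S b"
      proof
        fix x assume "x \<in> S"
        then obtain c where c: "\<forall>j\<in>{1..m}. 0 \<le> c j" and x: "x = lin a m c" using S_lin by auto
        define e where "e = Min (insert (1/2) ((\<lambda>i. v i / (c i + 1)) ` {1..m}))"
        have e_pos: "0 < e" unfolding e_def using vpos c by (auto simp: Min_gr_iff)
        have e_lt: "e < 1" unfolding e_def by (rule le_less_trans[OF Min_le[of _ "1/2"]]) auto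
        have ec: "\<forall>i\<in>{1..m}. e * c i \<le> v i"
        proof
          fix i assume i: "i \<in> {1..m}"
          have "e \<le> v i / (c i + 1)" unfolding e_def using i by (intro Min_le) auto
          then have "e * (c i + 1) \<le> v i" using c i by (simp add: pos_le_divide_eq add_nonneg_pos)
          moreover have "e * c i \<le> e * (c i + 1)" using e_pos by simp
          ultimately show "e * c i \<le> v i" by linarith
        qed
        show "x \<in> min_closed_face S b" unfolding min_closed_face_def
          using key_in[OF c x e_pos e_lt ec] by blast
      qed
    qed
    then show False using face_proper S_def by simp
  qed
  then obtain j0 where j0: "j0 \<in> {1..m}" "v j0 = 0" by blast

  have uS: "u \<in> S" using u_M unfolding MA_def S_def by auto
  then obtain cu where cu: "\<forall>j\<in>{1..m}. 0 \<le> cu j" and u_lin: "u = lin a m cu" using S_lin by auto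
  have l0: "real (l 0) > 0" using l_pos by auto
  have lj: "real (l j) > 0" if "j \<in> {1..m}" for j using l_pos that by auto
  have a0_lin: "a 0 = lin a m (\<lambda>j. real (l j) / real (l 0))"
  proof -
    have "real (l 0) *\<^sub>R a 0 = lin a m (\<lambda>j. real (l j))" using l_rel unfolding lin_def by simp
    then have "(1 / real (l 0)) *\<^sub>R (real (l 0) *\<^sub>R a 0) = (1 / real (l 0)) *\<^sub>R lin a m (\<lambda>j. real (l j))"
      by simp
    then have "a 0 = (1 / real (l 0)) *\<^sub>R lin a m (\<lambda>j. real (l j))" using l0 by simp
    then show ?thesis by (simp add: lin_scale)
  qed
  have shift: "u + real n *\<^sub>R a 0 = lin a m (\<lambda>j. cu j + real n * (real (l j) / real (l 0)))" for n
    unfolding u_lin a0_lin by (simp add: lin_scale lin_add)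

  define P where "P w s \<longleftrightarrow> (\<forall>j\<in>{1..m}. s j \<le> 0) \<and> w = (\<Sum>j=1..m. (v j - of_int (s j)) *\<^sub>R a j)"
    for w and s :: "nat \<Rightarrow> int"
  define pf where "pf s = (\<Prod>j=1..m. bracket (- complex_of_real (v j)) (s j) * (of_nat (l j)) powi (s j))"
    for s :: "nat \<Rightarrow> int"
  have gc: "gcoef a m l v w = (if Ex (P w) then pf (Eps (P w)) else 0)" for w
    unfolding gcoef_def P_def pf_def Let_def by simp
  have P_lin: "P w s \<longleftrightarrow> (\<forall>j\<in>{1..m}. s j \<le> 0) \<and> w = lin a m (\<lambda>j. v j - of_int (s j))" for w s
    unfolding P_def lin_def ..
  have pf0: "pf s = 0" if "j \<in> K" "s j < 0" for s j
  proof -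
    have "bracket (- complex_of_real (v j)) (s j) = 0" using that bracket_zero_neg K_def by simp
    then show ?thesis unfolding pf_def using that K_sub by (intro prod_zero) auto
  qed
  have j0K: "j0 \<in> K" using j0 K_def by simp

  have Z: "gcoef a m l v (u + real n *\<^sub>R a 0) = 0" if n: "n > 0" for n
  proof (cases "Ex (P (u + real n *\<^sub>R a 0))")
    case True
    define s where "s = Eps (P (u + real n *\<^sub>R a 0))"
    have Ps: "P (u + real n *\<^sub>R a 0) s" unfolding s_def using True by (rule someI_ex)
    then have "lin a m (\<lambda>j. v j - of_int (s j)) = lin a m (\<lambda>j. cu j + real n * (real (l j) / real (l 0)))"
      unfolding P_lin shift by simp
    then have "\<forall>i\<in>{1..m}. v i - of_int (s i) = cu i + real n * (real (l i) / real (l 0))"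
      by (simp only: leq)
    then have "v j0 - of_int (s j0) = cu j0 + real n * (real (l j0) / real (l 0))"
      using j0 by blast
    moreover have "cu j0 + real n * (real (l j0) / real (l 0)) > 0"
      using cu j0 lj[OF j0(1)] l0 n by (simp add: add_nonneg_pos)
    ultimately have "s j0 < 0" using j0 by simp
    then have "pf s = 0" using pf0 j0K by blast
    then show ?thesis using True gc s_def by simp
  qed (use gc in auto)

  have form_lin: "b + (\<Sum>j\<in>J. of_nat (t j) *\<^sub>R a j) = lin a m (\<lambda>j. v j + (if j \<in> J then real (t j) else 0))"
    for t :: "nat \<Rightarrow> nat"
    unfolding lin_sub[OF J_sub] b_lin lin_add by simp

  define val where "val t = (\<Prod>j\<in>J. (of_nat (l j) :: complex) powi (- int (t j)))
                  * (\<Prod>j\<in>J. bracket (- complex_of_real (v j)) (- int (t j)))" for t :: "nat \<Rightarrow> nat"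

  have V: "gcoef a m l v u = val t" if ut: "u = b + (\<Sum>j\<in>J. of_nat (t j) *\<^sub>R a j)" for t
  proof -
    define s0 where "s0 j = (if j \<in> J then - int (t j) else 0)" for j
    have Ps0: "P u s0" unfolding P_lin ut form_lin s0_def
      by (simp add: leq)
    then have ex: "Ex (P u)" by blast
    define s where "s = Eps (P u)"
    have Ps: "P u s" unfolding s_def using ex by (rule someI_ex)
    have "\<forall>j\<in>{1..m}. v j - of_int (s j) = v j - of_int (s0 j)"
      using Ps Ps0 unfolding P_lin using leq by metis
    then have ss0: "\<forall>j\<in>{1..m}. s j = s0 j" by simp
    have "pf s = (\<Prod>j=1..m. bracket (- complex_of_real (v j)) (s0 j) * (of_nat (l j)) powi (s0 j))"
      unfolding pf_def using ss0 by (intro prod.cong) auto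
    also have "\<dots> = (\<Prod>j\<in>J. bracket (- complex_of_real (v j)) (s0 j) * (of_nat (l j)) powi (s0 j))"
      by (rule prod.mono_neutral_right[OF fin1 J_sub]) (auto simp: s0_def bracket_def)
    also have "\<dots> = val t" unfolding val_def s0_def
      by (simp add: prod.distrib mult.commute)
    finally show ?thesis using gc ex s_def by simp
  qed

  have val_nz: "val t \<noteq> 0" for t
    unfolding val_def using J_eq lj by (auto simp: bracket_nonzero)

  have N: "gcoef a m l v u = 0" if nf: "\<nexists>t::nat \<Rightarrow> nat. u = b + (\<Sum>j\<in>J. of_nat (t j) *\<^sub>R a j)"
  proof (cases "Ex (P u)")
    case True
    define s where "s = Eps (P u)"
    have Ps: "P u s" unfolding s_def using True by (rule someI_ex)
    show ?thesis
    proof (cases "\<exists>j\<in>K. s j < 0")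
      case True
      then have "pf s = 0" using pf0 by blast
      then show ?thesis using gc \<open>Ex (P u)\<close> s_def by simp
    next
      case False
      define t where "t j = nat (- s j)" for j
      have "u = b + (\<Sum>j\<in>J. of_nat (t j) *\<^sub>R a j)"
        unfolding form_lin
      proof -
        have "u = lin a m (\<lambda>j. v j - of_int (s j))" using Ps P_lin by blast
        also have "\<dots> = lin a m (\<lambda>j. v j + (if j \<in> J then real (t j) else 0))"
          unfolding leq
        proof
          fix j assume j: "j \<in> {1..m}"
          have sj: "s j \<le> 0" using Ps P_lin j by blast
          show "v j - of_int (s j) = v j + (if j \<in> J then real (t j) else 0)"
          proof (cases "j \<in> J")
            case True then show ?thesis using sj by (simp add: t_def)
          next
            case nJ: False
            then have "j \<in> K" using j J_eq K_def v_range by force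
            then have "s j = 0" using False sj by force
            then show ?thesis using nJ by simp
          qed
        qed
        finally show "u = lin a m (\<lambda>j. v j + (if j \<in> J then real (t j) else 0))" .
      qed
      then show ?thesis using nf by blast
    qed
  qed (use gc in auto)

  have Gn: "Gser a m l v u = fps_const (gcoef a m l v u)"
  proof (rule fps_ext)
    fix n show "fps_nth (Gser a m l v u) n = fps_nth (fps_const (gcoef a m l v u)) n"
      unfolding Gser_def using Z[of n] by (cases "n = 0") auto
  qed

  show ?thesis
  proof (intro conjI allI impI)
    show "(\<exists>c. c \<noteq> 0 \<and> Gser a m l v u = fps_const c) \<longleftrightarrow> (\<exists>t::nat \<Rightarrow> nat. u = b + (\<Sum>j\<in>J. of_nat (t j) *\<^sub>R a j))"
    proof
      assume "\<exists>c. c \<noteq> 0 \<and> Gser a m l v u = fps_const c"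
      then obtain c where "c \<noteq> 0" "Gser a m l v u = fps_const c" by blast
      then show "\<exists>t::nat \<Rightarrow> nat. u = b + (\<Sum>j\<in>J. of_nat (t j) *\<^sub>R a j)"
        using N Gn by (metis fps_const_0_eq_0 fps_const_eq_0_iff)
    next
      assume "\<exists>t::nat \<Rightarrow> nat. u = b + (\<Sum>j\<in>J. of_nat (t j) *\<^sub>R a j)"
      then obtain t where "u = b + (\<Sum>j\<in>J. of_nat (t j) *\<^sub>R a j)" by blast
      then show "\<exists>c. c \<noteq> 0 \<and> Gser a m l v u = fps_const c" using V val_nz Gn by metis
    qed
  next
    fix t t' :: "nat \<Rightarrow> nat"
    assume "u = b + (\<Sum>j\<in>J. of_nat (t j) *\<^sub>R a j)" "u = b + (\<Sum>j\<in>J. of_nat (t' j) *\<^sub>R a j)"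
    then have "lin a m (\<lambda>j. v j + (if j \<in> J then real (t j) else 0)) = lin a m (\<lambda>j. v j + (if j \<in> J then real (t' j) else 0))"
      unfolding form_lin by simp
    then show "\<forall>j\<in>J. t j = t' j" unfolding leq using J_sub by force
  next
    fix t :: "nat \<Rightarrow> nat"
    assume "u = b + (\<Sum>j\<in>J. of_nat (t j) *\<^sub>R a j)"
    then show "Gser a m l v u = fps_const
                 ((\<Prod>j\<in>J. (of_nat (l j)) powi (- int (t j)))
                  * (\<Prod>j\<in>J. bracket (- complex_of_real (v j)) (- int (t j))))"
      using V Gn unfolding val_def by simp
  next
    assume "\<nexists>t::nat \<Rightarrow> nat. u = b + (\<Sum>j\<in>J. of_nat (t j) *\<^sub>R a j)"
    then show "Gser a m l v u = 0" using N Gn by simp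
  qed
qed

end
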